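(* Let $\Gamma$ be a group that is the directed union of a directed family $(\Gamma_i)_{i\in I}$ of subgroups. Let $n \in \mathbb{N}$, suppose $\operatorname{H}^n_b(\Gamma_i;\mathbb{R}) \cong 0$ for all $i \in I$, and suppose there is a finite constant $K$ bounding the $n$-th vanishing moduli of all $\Gamma_i$. Then $\operatorname{H}^n_b(\Gamma;\mathbb{R}) \cong 0$.
   Context: $\operatorname{C}^n_b(G;\mathbb{R}) = \ell^\infty(G^{n+1})^G$ (bounded real functions invariant under the diagonal action) with supremum norm $|\cdot|_\infty$ and homogeneous coboundary $\delta^n_b$; $\operatorname{H}^*_b(G;\mathbb{R})$ is its cohomology. If $\operatorname{H}^n_b(G;\mathbb{R})\cong 0$, the $n$-th vanishing modulus of $G$ is the minimal $K \in \mathbb{R}_{\geq 0}\cup\{\infty\}$ such that for every $c \in \ker \delta^n_b$ there is $b \in \operatorname{C}^{n-1}_b(G;\mathbb{R})$ with $\delta^{n-1}_b(b) = c$ and $|b|_\infty \leq K |c|_\infty$. *)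

theory Defs
  imports "HOL-Algebra.Group" "HOL-Library.Extended_Real" Complex_Main
begin

text \<open>An n-cochain is a real function on (n+1)-tuples of group elements, represented as
 lists of length n+1 with entries in carrier G; only its values on such lists matter.\<close>

definition tuples :: "('a, 'b) monoid_scheme \<Rightarrow> nat \<Rightarrow> 'a list set" where
  "tuples G m = {xs. length xs = m \<and> set xs \<subseteq> carrier G}"

definition bcochain :: "('a, 'b) monoid_scheme \<Rightarrow> nat \<Rightarrow> ('a list \<Rightarrow> real) \<Rightarrow> bool" where
  "bcochain G n f \<longleftrightarrow>
     (\<exists>B. \<forall>xs\<in>tuples G (Suc n). \<bar>f xs\<bar> \<le> B) \<and>
     (\<forall>g\<in>carrier G. \<forall>xs\<in>tuples G (Suc n). f (map (\<lambda>x. g \<otimes>\<^bsub>G\<^esub> x) xs) = f xs)"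

definition cobdry :: "('a list \<Rightarrow> real) \<Rightarrow> 'a list \<Rightarrow> real" where
  "cobdry f xs = (\<Sum>j<length xs. (-1) ^ j * f (take j xs @ drop (Suc j) xs))"

definition supnorm :: "('a, 'b) monoid_scheme \<Rightarrow> nat \<Rightarrow> ('a list \<Rightarrow> real) \<Rightarrow> real" where
  "supnorm G n f = (SUP xs\<in>tuples G (Suc n). \<bar>f xs\<bar>)"

definition bcocycle :: "('a, 'b) monoid_scheme \<Rightarrow> nat \<Rightarrow> ('a list \<Rightarrow> real) \<Rightarrow> bool" where
  "bcocycle G n c \<longleftrightarrow> bcochain G n c \<and> (\<forall>xs\<in>tuples G (Suc (Suc n)). cobdry c xs = 0)"

text \<open>b is a bounded (n-1)-cochain with coboundary c (in degree n); for n = 0 the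
 complex has C^{-1} = 0, so c must vanish.\<close>
definition bprimitive :: "('a, 'b) monoid_scheme \<Rightarrow> nat \<Rightarrow> ('a list \<Rightarrow> real) \<Rightarrow> ('a list \<Rightarrow> real) \<Rightarrow> bool" where
  "bprimitive G n b c \<longleftrightarrow>
     (case n of
        0 \<Rightarrow> (\<forall>xs\<in>tuples G 1. c xs = 0) \<and> (\<forall>xs. b xs = 0)
      | Suc m \<Rightarrow> bcochain G m b \<and> (\<forall>xs\<in>tuples G (Suc n). cobdry b xs = c xs))"

definition Hb_vanishes :: "('a, 'b) monoid_scheme \<Rightarrow> nat \<Rightarrow> bool" where
  "Hb_vanishes G n \<longleftrightarrow> (\<forall>c. bcocycle G n c \<longrightarrow> (\<exists>b. bprimitive G n b c))"

definition vanishing_const :: "('a, 'b) monoid_scheme \<Rightarrow> nat \<Rightarrow> real \<Rightarrow> bool" where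
  "vanishing_const G n K \<longleftrightarrow>
     (\<forall>c. bcocycle G n c \<longrightarrow>
        (\<exists>b. bprimitive G n b c \<and> supnorm G (n - 1) b \<le> K * supnorm G n c))"

definition vanishing_modulus :: "('a, 'b) monoid_scheme \<Rightarrow> nat \<Rightarrow> ereal" where
  "vanishing_modulus G n = Inf {ereal K | K. K \<ge> 0 \<and> vanishing_const G n K}"

end

theory Submission
  imports Defs "HOL-Analysis.Analysis"
begin

abbreviation PT :: "('x \<Rightarrow> real) topology" where
  "PT \<equiv> product_topology (\<lambda>_. euclideanreal) UNIV"

lemma fip_limit:
  fixes L :: "'k \<Rightarrow> ('x \<Rightarrow> real) \<Rightarrow> real" and r :: "'k \<Rightarrow> real" and B :: real
  assumes cont: "\<And>k. k \<in> Cs \<Longrightarrow> continuous_map PT euclideanreal (L k)"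
    and fip: "\<And>F. finite F \<Longrightarrow> F \<subseteq> Cs \<Longrightarrow> \<exists>f. (\<forall>x. \<bar>f x\<bar> \<le> B) \<and> (\<forall>k\<in>F. L k f = r k)"
  shows "\<exists>f. (\<forall>x. \<bar>f x\<bar> \<le> B) \<and> (\<forall>k\<in>Cs. L k f = r k)"
proof -
  define S where "S = PiE (UNIV::'x set) (\<lambda>_. {-B..B})"
  have S: "S = {f. \<forall>x. \<bar>f x\<bar> \<le> B}" proof -
    have e: "\<And>y::real. \<bar>y\<bar> \<le> B \<longleftrightarrow> y \<in> {-B..B}" by auto
    show ?thesis unfolding S_def PiE_UNIV_domain e by (auto simp: Pi_iff)
  qed
  have comp: "compactin PT S" unfolding S_def compactin_PiE by auto
  define U where "U = (\<lambda>k. {f \<in> topspace PT. L k f \<in> {r k}}) ` Cs"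
  have cl: "\<forall>C\<in>U. closedin PT C"
  proof
    fix C assume "C \<in> U"
    then obtain k where k: "k \<in> Cs" "C = {f \<in> topspace PT. L k f \<in> {r k}}" unfolding U_def by blast
    show "closedin PT C" unfolding k(2) by (rule closedin_continuous_map_preimage[OF cont[OF k(1)]]) simp
  qed
  have "S \<inter> \<Inter>\<F> \<noteq> {}" if FF: "finite \<F>" "\<F> \<subseteq> U" for \<F>
  proof -
    obtain F where F: "F \<subseteq> Cs" "finite F" "\<F> = (\<lambda>k. {f \<in> topspace PT. L k f \<in> {r k}}) ` F"
      using finite_subset_image[OF FF(1) FF(2)[unfolded U_def]] by blast
    then obtain f where "\<forall>x. \<bar>f x\<bar> \<le> B" "\<forall>k\<in>F. L k f = r k" using fip by blast
    then have "f \<in> S \<inter> \<Inter>\<F>" using F S by auto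
    then show ?thesis by blast
  qed
  then have "S \<inter> \<Inter>U \<noteq> {}" using comp cl unfolding compactin_fip by blast
  then obtain f where "f \<in> S" "f \<in> \<Inter>U" by blast
  then show ?thesis using S unfolding U_def by auto
qed

lemma cont_cobdry: "continuous_map PT euclideanreal (\<lambda>f. cobdry f xs)"
  unfolding cobdry_def
  by (intro continuous_map_sum continuous_map_real_mult_left continuous_map_product_projection) auto

lemma cont_inv: "continuous_map PT euclideanreal (\<lambda>f. f a - f b)"
  by (intro continuous_map_diff continuous_map_product_projection) auto


lemma directed_finite:
  assumes "finite E" "E \<subseteq> (\<Union>i\<in>I. H i)" "I \<noteq> {}"
    and dir: "\<And>i j. i \<in> I \<Longrightarrow> j \<in> I \<Longrightarrow> \<exists>k\<in>I. H i \<subseteq> H k \<and> H j \<subseteq> H k"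
  shows "\<exists>k\<in>I. E \<subseteq> H k"
  using assms(1,2)
proof (induction E rule: finite_induct)
  case empty then show ?case using assms(3) by auto
next
  case (insert x F)
  then obtain k where k: "k \<in> I" "F \<subseteq> H k" by auto
  obtain j where j: "j \<in> I" "x \<in> H j" using insert.prems by auto
  obtain l where "l \<in> I" "H k \<subseteq> H l" "H j \<subseteq> H l" using dir[OF k(1) j(1)] by blast
  then show ?case using k j by blast
qed

lemma tuples_sub: "tuples (G\<lparr>carrier := H\<rparr>) m = {xs. length xs = m \<and> set xs \<subseteq> H}"
  by (simp add: tuples_def)

lemma tuples_mono: "H \<subseteq> carrier G \<Longrightarrow> tuples (G\<lparr>carrier := H\<rparr>) m \<subseteq> tuples G m"
  by (auto simp: tuples_def)

lemma bcocycle_restrict: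
  assumes "bcocycle G n c" "H \<subseteq> carrier G"
  shows "bcocycle (G\<lparr>carrier := H\<rparr>) n c"
proof -
  have t: "\<And>m. tuples (G\<lparr>carrier := H\<rparr>) m \<subseteq> tuples G m" using tuples_mono[OF assms(2)] .
  from assms(1) obtain B where B: "\<forall>xs\<in>tuples G (Suc n). \<bar>c xs\<bar> \<le> B"
    unfolding bcocycle_def bcochain_def by blast
  show ?thesis using assms t B unfolding bcocycle_def bcochain_def
    by (auto simp: subset_iff) blast+
qed

lemma cobdry_cong:
  assumes "\<And>j. j < length xs \<Longrightarrow> f (take j xs @ drop (Suc j) xs) = g (take j xs @ drop (Suc j) xs)"
  shows "cobdry f xs = cobdry g xs"
  unfolding cobdry_def using assms by (intro sum.cong) auto

lemma del_in:
  assumes "j < length xs" "set xs \<subseteq> A"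
  shows "length (take j xs @ drop (Suc j) xs) = length xs - 1" "set (take j xs @ drop (Suc j) xs) \<subseteq> A"
  using assms set_take_subset[of j xs] set_drop_subset[of "Suc j" xs] by auto

lemma sup_bound:
  assumes "bcochain G n f" "xs \<in> tuples G (Suc n)"
  shows "\<bar>f xs\<bar> \<le> supnorm G n f"
proof -
  from assms(1) obtain B where "\<forall>xs\<in>tuples G (Suc n). \<bar>f xs\<bar> \<le> B" unfolding bcochain_def by blast
  then have "bdd_above ((\<lambda>xs. \<bar>f xs\<bar>) ` tuples G (Suc n))" by (auto intro: bdd_aboveI2)
  then show ?thesis unfolding supnorm_def using assms(2) by (rule cSUP_upper2) simp
qed

lemma sup_le:
  assumes "\<forall>xs\<in>tuples G (Suc n). \<bar>f xs\<bar> \<le> B" "tuples G (Suc n) \<noteq> {}"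
  shows "supnorm G n f \<le> B"
  unfolding supnorm_def using assms by (intro cSUP_least) auto


theorem proposition4p13:
  fixes G :: "('a, 'b) monoid_scheme" and H :: "'i \<Rightarrow> 'a set" and I :: "'i set"
    and n :: nat and K :: real
  assumes "group G"
    and "I \<noteq> {}"
    and "\<And>i. i \<in> I \<Longrightarrow> subgroup (H i) G"
    and "\<And>i j. i \<in> I \<Longrightarrow> j \<in> I \<Longrightarrow> \<exists>k\<in>I. H i \<subseteq> H k \<and> H j \<subseteq> H k"
    and "(\<Union>i\<in>I. H i) = carrier G"
    and "\<And>i. i \<in> I \<Longrightarrow> Hb_vanishes (G\<lparr>carrier := H i\<rparr>) n"
    and "\<And>i. i \<in> I \<Longrightarrow> vanishing_modulus (G\<lparr>carrier := H i\<rparr>) n \<le> ereal K"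
  shows "Hb_vanishes G n"
proof -
  note grp = assms(1) and Ine = assms(2) and sub = assms(3) and dir = assms(4)
    and un = assms(5) and hv = assms(6) and vm = assms(7)
  have Hsub: "H i \<subseteq> carrier G" if "i \<in> I" for i using sub[OF that] subgroup.subset by blast
  have ne: "tuples (G\<lparr>carrier := H i\<rparr>) m \<noteq> {}" if "i \<in> I" for i m
  proof -
    have "\<one>\<^bsub>G\<^esub> \<in> H i" using sub[OF that] subgroup.one_closed by blast
    then have "replicate m \<one>\<^bsub>G\<^esub> \<in> tuples (G\<lparr>carrier := H i\<rparr>) m" by (auto simp: tuples_sub)
    then show ?thesis by blast
  qed
  show ?thesis unfolding Hb_vanishes_def
  proof (intro allI impI)
    fix c assume c: "bcocycle G n c"
    have cr: "bcocycle (G\<lparr>carrier := H i\<rparr>) n c" if "i \<in> I" for i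
      using bcocycle_restrict[OF c Hsub[OF that]] .
    show "\<exists>b. bprimitive G n b c"
    proof (cases n)
      case 0
      have "c xs = 0" if xs: "xs \<in> tuples G 1" for xs
      proof -
        have "set xs \<subseteq> carrier G" using xs by (simp add: tuples_def)
        then obtain i where i: "i \<in> I" "set xs \<subseteq> H i"
          using directed_finite[where E="set xs" and I=I and H=H] Ine dir un by auto
        obtain b where "bprimitive (G\<lparr>carrier := H i\<rparr>) n b c"
          using hv[OF i(1)] cr[OF i(1)] unfolding Hb_vanishes_def by blast
        moreover have "xs \<in> tuples (G\<lparr>carrier := H i\<rparr>) 1" using xs i by (auto simp: tuples_def)
        ultimately show ?thesis using 0 by (auto simp: bprimitive_def)
      qed
      then have "bprimitive G n (\<lambda>_. 0) c" using 0 by (simp add: bprimitive_def)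
      then show ?thesis by blast
    next
      case (Suc m)
      obtain Bc0 where Bc0: "\<forall>xs\<in>tuples G (Suc n). \<bar>c xs\<bar> \<le> Bc0"
        using c unfolding bcocycle_def bcochain_def by blast
      define Bc where "Bc = max Bc0 0"
      have Bc: "\<forall>xs\<in>tuples G (Suc n). \<bar>c xs\<bar> \<le> Bc" "Bc \<ge> 0" using Bc0 unfolding Bc_def by force+
      define B where "B = (K + 1) * Bc"
      have bi: "\<exists>b. bprimitive (G\<lparr>carrier := H i\<rparr>) n b c \<and>
                   (\<forall>xs\<in>tuples (G\<lparr>carrier := H i\<rparr>) (Suc m). \<bar>b xs\<bar> \<le> B)" if i: "i \<in> I" for i
      proof -
        let ?Gi = "G\<lparr>carrier := H i\<rparr>"
        have "Inf {ereal K | K. K \<ge> 0 \<and> vanishing_const ?Gi n K} < ereal (K + 1)"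
          using vm[OF i] unfolding vanishing_modulus_def by (rule le_less_trans) simp
        then obtain K' where K': "K' \<ge> 0" "vanishing_const ?Gi n K'" "ereal K' < ereal (K + 1)"
          unfolding Inf_less_iff by blast
        obtain b where b: "bprimitive ?Gi n b c" "supnorm ?Gi m b \<le> K' * supnorm ?Gi n c"
          using K'(2) cr[OF i] Suc unfolding vanishing_const_def by fastforce
        have bc: "bcochain ?Gi m b" using b(1) Suc by (simp add: bprimitive_def)
        have s1: "supnorm ?Gi n c \<le> Bc"
          using Bc(1) ne[OF i] tuples_mono[OF Hsub[OF i]] by (intro sup_le) auto
        obtain ys where ys: "ys \<in> tuples ?Gi (Suc n)" using ne[OF i] by blast
        have s0: "0 \<le> supnorm ?Gi n c"
          using sup_bound[OF _ ys, of c] cr[OF i] unfolding bcocycle_def by (meson abs_ge_zero order_trans)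
        have "K' * supnorm ?Gi n c \<le> (K + 1) * Bc"
          using K' s0 s1 by (intro mult_mono) auto
        then have "\<forall>xs\<in>tuples ?Gi (Suc m). \<bar>b xs\<bar> \<le> B"
          using sup_bound[OF bc] b(2) unfolding B_def by (meson order_trans)
        then show ?thesis using b(1) by blast
      qed
      then have "\<forall>i\<in>I. \<exists>b. bprimitive (G\<lparr>carrier := H i\<rparr>) n b c \<and>
                   (\<forall>xs\<in>tuples (G\<lparr>carrier := H i\<rparr>) (Suc m). \<bar>b xs\<bar> \<le> B)" by blast
      from bchoice[OF this] obtain bb where bb0: "\<forall>i\<in>I. bprimitive (G\<lparr>carrier := H i\<rparr>) n (bb i) c \<and>
                   (\<forall>xs\<in>tuples (G\<lparr>carrier := H i\<rparr>) (Suc m). \<bar>bb i xs\<bar> \<le> B)" by blast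
      have bb: "bprimitive (G\<lparr>carrier := H i\<rparr>) n (bb i) c \<and>
                   (\<forall>xs\<in>tuples (G\<lparr>carrier := H i\<rparr>) (Suc m). \<bar>bb i xs\<bar> \<le> B)" if "i \<in> I" for i
        using bb0 that by blast
      have B0: "B \<ge> 0"
      proof -
        obtain i where "i \<in> I" using Ine by blast
        moreover then obtain ys where "ys \<in> tuples (G\<lparr>carrier := H i\<rparr>) (Suc m)" using ne by blast
        ultimately show ?thesis using bb by (meson abs_ge_zero order_trans)
      qed
      define L :: "'a list + 'a \<times> 'a list \<Rightarrow> ('a list \<Rightarrow> real) \<Rightarrow> real" where
        "L k f = (case k of Inl xs \<Rightarrow> cobdry f xs | Inr (g, ys) \<Rightarrow> f (map (\<lambda>x. g \<otimes>\<^bsub>G\<^esub> x) ys) - f ys)" for k f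
      define r :: "'a list + 'a \<times> 'a list \<Rightarrow> real" where
        "r k = (case k of Inl xs \<Rightarrow> c xs | Inr _ \<Rightarrow> 0)" for k
      define Cs where "Cs = Inl ` tuples G (Suc n) \<union> Inr ` (carrier G \<times> tuples G (Suc m))"
      define els :: "'a list + 'a \<times> 'a list \<Rightarrow> 'a set" where
        "els k = (case k of Inl xs \<Rightarrow> set xs | Inr (g, ys) \<Rightarrow> insert g (set ys))" for k
      have cont: "continuous_map PT euclideanreal (L k)" for k
        unfolding L_def by (cases k) (auto simp: cont_cobdry cont_inv)
      have fip: "\<exists>f. (\<forall>x. \<bar>f x\<bar> \<le> B) \<and> (\<forall>k\<in>F. L k f = r k)" if F: "finite F" "F \<subseteq> Cs" for F
      proof -
        have fe: "finite (els k)" for k by (cases k) (auto simp: els_def)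
        have "finite (\<Union>k\<in>F. els k)" using F(1) fe by simp
        moreover have "(\<Union>k\<in>F. els k) \<subseteq> (\<Union>i\<in>I. H i)"
        proof
          fix x assume "x \<in> (\<Union>k\<in>F. els k)"
          then obtain k where "k \<in> F" "x \<in> els k" by blast
          moreover have "k \<in> Cs" using F(2) \<open>k \<in> F\<close> by blast
          ultimately have "x \<in> carrier G" by (auto simp: Cs_def els_def tuples_def)
          then show "x \<in> (\<Union>i\<in>I. H i)" using un by simp
        qed
        ultimately have "\<exists>k\<in>I. (\<Union>k\<in>F. els k) \<subseteq> H k"
          by (rule directed_finite[OF _ _ Ine dir])
        then obtain k0 where k0: "k0 \<in> I" "(\<Union>k\<in>F. els k) \<subseteq> H k0" by blast
        let ?Gk = "G\<lparr>carrier := H k0\<rparr>"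
        define f where "f xs = (if xs \<in> tuples ?Gk (Suc m) then bb k0 xs else 0)" for xs
        have fb: "\<forall>x. \<bar>f x\<bar> \<le> B"
        proof
          fix x show "\<bar>f x\<bar> \<le> B"
          proof (cases "x \<in> tuples ?Gk (Suc m)")
            case True then show ?thesis using bb[OF k0(1)] by (simp add: f_def)
          next
            case False then show ?thesis using B0 by (simp add: f_def)
          qed
        qed
        have bp: "bcochain ?Gk m (bb k0)" "\<forall>xs\<in>tuples ?Gk (Suc n). cobdry (bb k0) xs = c xs"
          using bb[OF k0(1)] Suc by (simp_all add: bprimitive_def)
        have "L k f = r k" if k: "k \<in> F" for k
        proof (cases k)
          case (Inl xs)
          have "Inl xs \<in> Cs" using k F(2) Inl by blast
          then have xs1: "xs \<in> tuples G (Suc n)" by (auto simp: Cs_def)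
          have "els k \<subseteq> H k0" using k k0(2) by blast
          then have xs: "xs \<in> tuples G (Suc n)" "set xs \<subseteq> H k0" using xs1 Inl by (simp_all add: els_def)
          have "cobdry f xs = cobdry (bb k0) xs"
          proof (rule cobdry_cong)
            fix j assume "j < length xs"
            then have "take j xs @ drop (Suc j) xs \<in> tuples ?Gk (Suc m)"
              using del_in[OF _ xs(2), of j] xs(1) Suc by (auto simp: tuples_def)
            then show "f (take j xs @ drop (Suc j) xs) = bb k0 (take j xs @ drop (Suc j) xs)"
              by (simp add: f_def)
          qed
          also have "\<dots> = c xs" using bp(2) xs by (auto simp: tuples_def)
          finally show ?thesis using Inl by (simp add: L_def r_def)
        next
          case (Inr p)
          then obtain g ys where p: "k = Inr (g, ys)" by (cases p) auto
          have "Inr (g, ys) \<in> Cs" using k F(2) p by blast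
          then have gy1: "ys \<in> tuples G (Suc m)" by (auto simp: Cs_def)
          have "els k \<subseteq> H k0" using k k0(2) by blast
          then have gy: "ys \<in> tuples G (Suc m)" "g \<in> H k0" "set ys \<subseteq> H k0" using gy1 p by (simp_all add: els_def)
          have y1: "ys \<in> tuples ?Gk (Suc m)" using gy by (auto simp: tuples_def)
          have "set (map (\<lambda>x. g \<otimes>\<^bsub>G\<^esub> x) ys) \<subseteq> H k0"
          proof
            fix y assume "y \<in> set (map (\<lambda>x. g \<otimes>\<^bsub>G\<^esub> x) ys)"
            then obtain x where x: "x \<in> set ys" "y = g \<otimes>\<^bsub>G\<^esub> x" by auto
            then show "y \<in> H k0" using subgroup.m_closed[OF sub[OF k0(1)]] gy(2,3) by blast
          qed
          then have y2: "map (\<lambda>x. g \<otimes>\<^bsub>G\<^esub> x) ys \<in> tuples ?Gk (Suc m)" using gy by (auto simp: tuples_def)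
          have inv: "\<forall>g\<in>H k0. \<forall>xs\<in>tuples ?Gk (Suc m). bb k0 (map (\<lambda>x. g \<otimes>\<^bsub>G\<^esub> x) xs) = bb k0 xs"
            using bp(1) unfolding bcochain_def by simp
          have "bb k0 (map (\<lambda>x. g \<otimes>\<^bsub>G\<^esub> x) ys) = bb k0 ys"
            using inv gy(2) y1 by blast
          then show ?thesis using p y1 y2 by (simp add: L_def r_def f_def)
        qed
        then show ?thesis using fb by blast
      qed
      obtain f where f: "\<forall>x. \<bar>f x\<bar> \<le> B" "\<forall>k\<in>Cs. L k f = r k"
        using fip_limit[of Cs L B r, OF cont fip] by blast
      have "bcochain G m f"
        unfolding bcochain_def
      proof (intro conjI ballI)
        show "\<exists>B. \<forall>xs\<in>tuples G (Suc m). \<bar>f xs\<bar> \<le> B" using f(1) by blast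
      next
        fix g xs assume "g \<in> carrier G" "xs \<in> tuples G (Suc m)"
        then have "Inr (g, xs) \<in> Cs" by (simp add: Cs_def)
        then show "f (map (\<lambda>x. g \<otimes>\<^bsub>G\<^esub> x) xs) = f xs" using f(2) by (force simp: L_def r_def)
      qed
      moreover have "\<forall>xs\<in>tuples G (Suc n). cobdry f xs = c xs"
      proof
        fix xs assume "xs \<in> tuples G (Suc n)"
        then have "Inl xs \<in> Cs" by (simp add: Cs_def)
        then show "cobdry f xs = c xs" using f(2) by (force simp: L_def r_def)
      qed
      ultimately have "bprimitive G n f c" using Suc by (simp add: bprimitive_def)
      then show ?thesis by blast
    qed
  qed
qed

end
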